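(* Let $\mathcal{R}$ be a coherent risk measure on $\mathscr{L}^2$ with dual representation $\mathcal{R}(\xi_0)=\sup_{\eta_0\in\mathcal{Q}}\mathbb{E}(\xi_0\eta_0)$ for all $\xi_0\in\mathscr{L}^2$, where $\mathcal{Q}\subset\mathcal{P}$ is its (unique) risk envelope, and let $\mathcal{V}$ be a coherent regret measure on $\mathscr{L}^2$ with dual representation $\mathcal{V}(\xi_0)=\sup_{\eta_0\in\tilde{\mathcal{Q}}}\mathbb{E}(\xi_0\eta_0)$ for all $\xi_0\in\mathscr{L}^2$, where $\tilde{\mathcal{Q}}\subset\tilde{\mathcal{P}}$ is its (unique) regret envelope and $\tilde{\mathcal{Q}}$ is compact. Then $$\mathcal{R}(\xi_0)=\inf_{y\in\mathbb{R}}\{\,y+\mathcal{V}(\xi_0-y)\,\}\quad\text{for all }\xi_0\in\mathscr{L}^2$$ holds if and only if $\mathcal{Q}=\tilde{\mathcal{Q}}\cap\mathcal{P}$.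
   Context: $\mathscr{L}^2$ denotes the space of square-integrable real random variables on a fixed probability space with probability measure $\mathbb{P}$; $\mathbb{E}$ is expectation with respect to $\mathbb{P}$; inequalities between random variables hold almost everywhere. A functional $\mathcal{R}:\mathscr{L}^2\to(-\infty,+\infty]$ is a coherent risk measure if: (A1) $\mathcal{R}(C)=C$ for every constant $C$; (A2) $\mathcal{R}((1-\lambda)\xi_0+\lambda\xi_0')\le(1-\lambda)\mathcal{R}(\xi_0)+\lambda\mathcal{R}(\xi_0')$ for $\lambda\in[0,1]$; (A3) $\mathcal{R}(\xi_0)\le\mathcal{R}(\xi_0')$ whenever $\xi_0\le\xi_0'$ a.e.; (A4) if $\|\xi_0^k-\xi_0\|_2\to0$ and $\mathcal{R}(\xi_0^k)\le C$ for all $k$, then $\mathcal{R}(\xi_0)\le C$; (A5) $\mathcal{R}(\lambda\xi_0)=\lambda\mathcal{R}(\xi_0)$ for $\lambda>0$. A functional $\mathcal{V}:\mathscr{L}^2\to(-\infty,+\infty]$ is a coherent regret measure if: (B1) $\mathcal{V}(0)=0$; (B2) $\mathcal{V}$ is convex in the sense of (A2); (B3) $\mathcal{V}(\xi_0)\le\mathcal{V}(\xi_0')$ whenever $\xi_0\le\xi_0'$ a.e.; (B4) if $\|\xi_0^k-\xi_0\|_2\to0$ and $\mathcal{V}(\xi_0^k)\le0$ for all $k$, then $\mathcal{V}(\xi_0)\le0$; (B5) $\mathcal{V}(\lambda\xi_0)=\lambda\mathcal{V}(\xi_0)$ for $\lambda>0$. Set $\mathcal{P}=\{\eta_0\in\mathscr{L}^2:\mathbb{E}(\eta_0)=1,\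 \eta_0\ge0\}$ and $\tilde{\mathcal{P}}=\{\eta_0\in\mathscr{L}^2:\eta_0\ge0\}$. Every coherent risk measure $\mathcal{R}$ admits a unique nonempty, convex, closed set $\mathcal{Q}\subset\mathcal{P}$ (its risk envelope) with $\mathcal{R}(\xi_0)=\sup_{\eta_0\in\mathcal{Q}}\mathbb{E}(\xi_0\eta_0)$; every coherent regret measure $\mathcal{V}$ admits a unique nonempty, convex, closed set $\tilde{\mathcal{Q}}\subset\tilde{\mathcal{P}}$ with $\mathcal{V}(\xi_0)=\sup_{\eta_0\in\tilde{\mathcal{Q}}}\mathbb{E}(\xi_0\eta_0)$. *)

theory Defs
  imports "HOL-Probability.Probability"
begin

text \<open>The space L2 of square-integrable real random variables on the probability
space M (represented by functions; a.e.-equal functions are not identified,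
but all notions below are insensitive to a.e. modification).\<close>

definition L2 :: "'a measure \<Rightarrow> ('a \<Rightarrow> real) set" where
  "L2 M = {f. f \<in> borel_measurable M \<and> integrable M (\<lambda>x. (f x)\<^sup>2)}"

definition l2norm :: "'a measure \<Rightarrow> ('a \<Rightarrow> real) \<Rightarrow> real" where
  "l2norm M f = sqrt (integral\<^sup>L M (\<lambda>x. (f x)\<^sup>2))"

definition Ex :: "'a measure \<Rightarrow> ('a \<Rightarrow> real) \<Rightarrow> real" where
  "Ex M f = integral\<^sup>L M f"

definition coherent_risk_measure :: "'a measure \<Rightarrow> (('a \<Rightarrow> real) \<Rightarrow> ereal) \<Rightarrow> bool" where
  "coherent_risk_measure M R \<longleftrightarrow>
     (\<forall>C::real. R (\<lambda>_. C) = ereal C) \<and>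
     (\<forall>\<xi>\<in>L2 M. \<forall>\<xi>'\<in>L2 M. \<forall>l::real. 0 \<le> l \<and> l \<le> 1 \<longrightarrow>
        R (\<lambda>x. (1 - l) * \<xi> x + l * \<xi>' x) \<le> ereal (1 - l) * R \<xi> + ereal l * R \<xi>') \<and>
     (\<forall>\<xi>\<in>L2 M. \<forall>\<xi>'\<in>L2 M. (AE x in M. \<xi> x \<le> \<xi>' x) \<longrightarrow> R \<xi> \<le> R \<xi>') \<and>
     (\<forall>\<xi>s \<xi> (C::real). (\<forall>k. \<xi>s k \<in> L2 M) \<and> \<xi> \<in> L2 M \<and>
        (\<lambda>k. l2norm M (\<lambda>x. \<xi>s k x - \<xi> x)) \<longlonglongrightarrow> 0 \<and> (\<forall>k. R (\<xi>s k) \<le> ereal C)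
        \<longrightarrow> R \<xi> \<le> ereal C) \<and>
     (\<forall>\<xi>\<in>L2 M. \<forall>l::real. l > 0 \<longrightarrow> R (\<lambda>x. l * \<xi> x) = ereal l * R \<xi>)"

definition coherent_regret_measure :: "'a measure \<Rightarrow> (('a \<Rightarrow> real) \<Rightarrow> ereal) \<Rightarrow> bool" where
  "coherent_regret_measure M V \<longleftrightarrow>
     V (\<lambda>_. 0) = 0 \<and>
     (\<forall>\<xi>\<in>L2 M. \<forall>\<xi>'\<in>L2 M. \<forall>l::real. 0 \<le> l \<and> l \<le> 1 \<longrightarrow>
        V (\<lambda>x. (1 - l) * \<xi> x + l * \<xi>' x) \<le> ereal (1 - l) * V \<xi> + ereal l * V \<xi>') \<and>
     (\<forall>\<xi>\<in>L2 M. \<forall>\<xi>'\<in>L2 M. (AE x in M. \<xi> x \<le> \<xi>' x) \<longrightarrow> V \<xi> \<le> V \<xi>') \<and>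
     (\<forall>\<xi>s \<xi>. (\<forall>k. \<xi>s k \<in> L2 M) \<and> \<xi> \<in> L2 M \<and>
        (\<lambda>k. l2norm M (\<lambda>x. \<xi>s k x - \<xi> x)) \<longlonglongrightarrow> 0 \<and> (\<forall>k. V (\<xi>s k) \<le> 0)
        \<longrightarrow> V \<xi> \<le> 0) \<and>
     (\<forall>\<xi>\<in>L2 M. \<forall>l::real. l > 0 \<longrightarrow> V (\<lambda>x. l * \<xi> x) = ereal l * V \<xi>)"

definition Pset :: "'a measure \<Rightarrow> ('a \<Rightarrow> real) set" where
  "Pset M = {\<eta> \<in> L2 M. Ex M \<eta> = 1 \<and> (AE x in M. \<eta> x \<ge> 0)}"

definition Ptilde :: "'a measure \<Rightarrow> ('a \<Rightarrow> real) set" where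
  "Ptilde M = {\<eta> \<in> L2 M. AE x in M. \<eta> x \<ge> 0}"

definition L2_convex :: "('a \<Rightarrow> real) set \<Rightarrow> bool" where
  "L2_convex S \<longleftrightarrow> (\<forall>\<eta>\<in>S. \<forall>\<eta>'\<in>S. \<forall>t::real. 0 \<le> t \<and> t \<le> 1 \<longrightarrow>
      (\<lambda>x. (1 - t) * \<eta> x + t * \<eta>' x) \<in> S)"

text \<open>Closedness in the L2-norm topology (sequential, which is equivalent in a
(pseudo)metric space).\<close>
definition L2_closed :: "'a measure \<Rightarrow> ('a \<Rightarrow> real) set \<Rightarrow> bool" where
  "L2_closed M S \<longleftrightarrow> (\<forall>\<eta>s \<eta>. (\<forall>k. \<eta>s k \<in> S) \<and> \<eta> \<in> L2 M \<and>
      (\<lambda>k. l2norm M (\<lambda>x. \<eta>s k x - \<eta> x)) \<longlonglongrightarrow> 0 \<longrightarrow> \<eta> \<in> S)"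

text \<open>Compactness in the L2-norm topology (sequential compactness, equivalent in a
(pseudo)metric space).\<close>
definition L2_compact :: "'a measure \<Rightarrow> ('a \<Rightarrow> real) set \<Rightarrow> bool" where
  "L2_compact M S \<longleftrightarrow> S \<subseteq> L2 M \<and> (\<forall>\<eta>s. (\<forall>k. \<eta>s k \<in> S) \<longrightarrow>
      (\<exists>(r::nat \<Rightarrow> nat) \<eta>. strict_mono r \<and> \<eta> \<in> S \<and>
         (\<lambda>k. l2norm M (\<lambda>x. \<eta>s (r k) x - \<eta> x)) \<longlonglongrightarrow> 0))"

definition risk_envelope :: "'a measure \<Rightarrow> (('a \<Rightarrow> real) \<Rightarrow> ereal) \<Rightarrow> ('a \<Rightarrow> real) set \<Rightarrow> bool" where
  "risk_envelope M R Q \<longleftrightarrow> Q \<noteq> {} \<and> L2_convex Q \<and> L2_closed M Q \<and> Q \<subseteq> Pset M \<and>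
     (\<forall>\<xi>\<in>L2 M. R \<xi> = (SUP \<eta>\<in>Q. ereal (Ex M (\<lambda>x. \<xi> x * \<eta> x))))"

definition regret_envelope :: "'a measure \<Rightarrow> (('a \<Rightarrow> real) \<Rightarrow> ereal) \<Rightarrow> ('a \<Rightarrow> real) set \<Rightarrow> bool" where
  "regret_envelope M V Q \<longleftrightarrow> Q \<noteq> {} \<and> L2_convex Q \<and> L2_closed M Q \<and> Q \<subseteq> Ptilde M \<and>
     (\<forall>\<xi>\<in>L2 M. V \<xi> = (SUP \<eta>\<in>Q. ereal (Ex M (\<lambda>x. \<xi> x * \<eta> x))))"

end

theory Submission
  imports Defs
begin

lemma L2_meas: "f \<in> L2 M \<Longrightarrow> f \<in> borel_measurable M" by (simp add: L2_def)
lemma L2_sq: "f \<in> L2 M \<Longrightarrow> integrable M (\<lambda>x. (f x)\<^sup>2)" by (simp add: L2_def)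

lemma L2_int: assumes P: "prob_space M" and f: "f \<in> L2 M" shows "integrable M f"
proof -
  interpret prob_space M by fact
  show ?thesis by (rule square_integrable_imp_integrable[OF L2_meas[OF f]]) (use L2_sq[OF f] in simp)
qed

lemma absprod_le: "\<bar>(a::real) * b\<bar> \<le> a\<^sup>2 + b\<^sup>2"
proof -
  have "0 \<le> (\<bar>a\<bar> - \<bar>b\<bar>)\<^sup>2" by simp
  also have "\<dots> = a\<^sup>2 + b\<^sup>2 - 2 * (\<bar>a\<bar> * \<bar>b\<bar>)" by (simp add: power2_diff)
  finally have "2 * (\<bar>a\<bar> * \<bar>b\<bar>) \<le> a\<^sup>2 + b\<^sup>2" by linarith
  moreover have "\<bar>a\<bar> * \<bar>b\<bar> \<ge> 0" by simp
  ultimately show ?thesis unfolding abs_mult by linarith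
qed

lemma L2_mult_int: assumes "f \<in> L2 M" "g \<in> L2 M" shows "integrable M (\<lambda>x. f x * g x)"
proof (rule Bochner_Integration.integrable_bound[of M "\<lambda>x. (f x)\<^sup>2 + (g x)\<^sup>2"])
  show "integrable M (\<lambda>x. (f x)\<^sup>2 + (g x)\<^sup>2)" using assms by (auto simp: L2_def)
  have [measurable]: "f \<in> borel_measurable M" "g \<in> borel_measurable M" using assms by (auto simp: L2_def)
  show "(\<lambda>x. f x * g x) \<in> borel_measurable M" by measurable
  show "AE x in M. norm (f x * g x) \<le> norm ((f x)\<^sup>2 + (g x)\<^sup>2)"
    using absprod_le by (auto intro!: AE_I2)
qed

lemma L2_lin: assumes "f \<in> L2 M" "g \<in> L2 M" shows "(\<lambda>x. a * f x + b * g x) \<in> L2 M"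
proof -
  have [measurable]: "f \<in> borel_measurable M" "g \<in> borel_measurable M" using assms by (auto simp: L2_def)
  have "integrable M (\<lambda>x. (a * f x + b * g x)\<^sup>2)"
  proof (rule Bochner_Integration.integrable_bound[of M "\<lambda>x. 2 * a\<^sup>2 * (f x)\<^sup>2 + 2 * b\<^sup>2 * (g x)\<^sup>2"])
    show "integrable M (\<lambda>x. 2 * a\<^sup>2 * (f x)\<^sup>2 + 2 * b\<^sup>2 * (g x)\<^sup>2)" using assms by (auto simp: L2_def)
    show "(\<lambda>x. (a * f x + b * g x)\<^sup>2) \<in> borel_measurable M" by measurable
    have "(u + v)\<^sup>2 \<le> 2 * u\<^sup>2 + 2 * v\<^sup>2" for u v :: real
      by (smt (verit) power2_sum sum_squares_bound zero_le_square power2_diff)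
    from this[of "a * f x" "b * g x" for x]
    show "AE x in M. norm ((a * f x + b * g x)\<^sup>2) \<le> norm (2 * a\<^sup>2 * (f x)\<^sup>2 + 2 * b\<^sup>2 * (g x)\<^sup>2)"
      by (auto intro!: AE_I2 simp: power_mult_distrib mult.assoc)
  qed
  then show ?thesis by (simp add: L2_def)
qed

lemma L2_const: assumes "prob_space M" shows "(\<lambda>x. c) \<in> L2 M"
proof -
  interpret prob_space M by fact
  show ?thesis by (simp add: L2_def)
qed

lemma L2_diff: "f \<in> L2 M \<Longrightarrow> g \<in> L2 M \<Longrightarrow> (\<lambda>x. f x - g x) \<in> L2 M"
  using L2_lin[of f M g 1 "-1"] by simp
lemma L2_add: "f \<in> L2 M \<Longrightarrow> g \<in> L2 M \<Longrightarrow> (\<lambda>x. f x + g x) \<in> L2 M"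
  using L2_lin[of f M g 1 1] by simp
lemma L2_cmult: "f \<in> L2 M \<Longrightarrow> (\<lambda>x. c * f x) \<in> L2 M"
  using L2_lin[of f M f c 0] by simp
lemma L2_diffc: "prob_space M \<Longrightarrow> f \<in> L2 M \<Longrightarrow> (\<lambda>x. f x - c) \<in> L2 M"
  using L2_diff[OF _ L2_const] by blast

lemma amgm_bound:
  fixes A B c :: real
  assumes H: "\<And>t. t > 0 \<Longrightarrow> c \<le> (t * A + B / t) / 2" and A: "A \<ge> 0" and B: "B \<ge> 0"
  shows "c \<le> sqrt A * sqrt B"
proof (cases "A > 0 \<and> B > 0")
  case True
  define t where "t = sqrt B / sqrt A"
  have tp: "t > 0" using True by (simp add: t_def)
  have sA: "sqrt A > 0" "sqrt B > 0" using True by auto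
  have "t * A = sqrt B * (A / sqrt A)" by (simp add: t_def)
  also have "A / sqrt A = sqrt A" using A by (rule real_div_sqrt)
  finally have 1: "t * A = sqrt A * sqrt B" by simp
  have "B / t = sqrt A * (B / sqrt B)" by (simp add: t_def)
  also have "B / sqrt B = sqrt B" using B by (rule real_div_sqrt)
  finally have 2: "B / t = sqrt A * sqrt B" by simp
  show ?thesis using H[OF tp] 1 2 by simp
next
  case False
  show ?thesis
  proof (rule ccontr)
    assume nc: "\<not> c \<le> sqrt A * sqrt B"
    have "sqrt A * sqrt B \<ge> 0" using A B by simp
    with nc have c: "c > 0" by linarith
    show False
    proof (cases "A = 0")
      case True
      define t where "t = (B + 1) / c"
      have tp: "t > 0" using c B by (simp add: t_def)
      have "B / t = B * c / (B + 1)" using c B by (simp add: t_def)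
      also have "\<dots> < c" using c B by (simp add: divide_less_eq)
      finally show False using H[OF tp] True c by simp
    next
      case False
      then have "B = 0" using \<open>\<not> (A > 0 \<and> B > 0)\<close> A B by auto
      define t where "t = c / (A + 1)"
      have tp: "t > 0" using c A by (simp add: t_def)
      have "t * A = A * c / (A + 1)" using c A by (simp add: t_def)
      also have "\<dots> < c" using c A by (simp add: divide_less_eq)
      finally show False using H[OF tp] \<open>B = 0\<close> c by simp
    qed
  qed
qed

lemma CS:
  assumes f: "f \<in> L2 M" and g: "g \<in> L2 M"
  shows "\<bar>Ex M (\<lambda>x. f x * g x)\<bar> \<le> sqrt (Ex M (\<lambda>x. (f x)\<^sup>2)) * sqrt (Ex M (\<lambda>x. (g x)\<^sup>2))"
proof (rule amgm_bound)
  show "Ex M (\<lambda>x. (f x)\<^sup>2) \<ge> 0" "Ex M (\<lambda>x. (g x)\<^sup>2) \<ge> 0" by (auto simp: Ex_def)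
  fix t :: real assume t: "t > 0"
  have pt: "\<bar>u * v\<bar> \<le> (t * u\<^sup>2 + v\<^sup>2 / t) / 2" for u v :: real
  proof -
    have "0 \<le> (t * \<bar>u\<bar> - \<bar>v\<bar>)\<^sup>2" by simp
    hence "2 * t * \<bar>u * v\<bar> \<le> t * (t * u\<^sup>2) + v\<^sup>2"
      by (simp add: power2_eq_square algebra_simps abs_mult)
    thus ?thesis using t by (simp add: field_simps)
  qed
  have i1: "integrable M (\<lambda>x. f x * g x)" by (rule L2_mult_int[OF f g])
  have "\<bar>Ex M (\<lambda>x. f x * g x)\<bar> \<le> integral\<^sup>L M (\<lambda>x. \<bar>f x * g x\<bar>)"
    unfolding Ex_def using integral_abs_bound[of M "\<lambda>x. f x * g x"] by simp
  also have "\<dots> \<le> integral\<^sup>L M (\<lambda>x. (t * (f x)\<^sup>2 + (g x)\<^sup>2 / t) / 2)"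
    using f g i1 pt by (intro integral_mono) (auto simp: L2_def)
  also have "\<dots> = (t * Ex M (\<lambda>x. (f x)\<^sup>2) + Ex M (\<lambda>x. (g x)\<^sup>2) / t) / 2"
    using f g by (simp add: Ex_def L2_def)
  finally show "\<bar>Ex M (\<lambda>x. f x * g x)\<bar> \<le> (t * Ex M (\<lambda>x. (f x)\<^sup>2) + Ex M (\<lambda>x. (g x)\<^sup>2) / t) / 2" .
qed

lemma Ex_sq_nonneg: "Ex M (\<lambda>x. (f x)\<^sup>2) \<ge> 0" by (simp add: Ex_def)

lemma Ex_mult_diff: assumes "f \<in> L2 M" "g \<in> L2 M" "h \<in> L2 M"
  shows "Ex M (\<lambda>x. f x * (g x - h x)) = Ex M (\<lambda>x. f x * g x) - Ex M (\<lambda>x. f x * h x)"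
proof -
  have "(\<lambda>x. f x * (g x - h x)) = (\<lambda>x. f x * g x - f x * h x)" by (auto simp: algebra_simps)
  then show ?thesis using L2_mult_int[OF assms(1,2)] L2_mult_int[OF assms(1,3)] by (simp add: Ex_def)
qed

lemma Ex_shift: assumes P: "prob_space M" and "f \<in> L2 M" "g \<in> L2 M"
  shows "Ex M (\<lambda>x. (f x - y) * g x) = Ex M (\<lambda>x. f x * g x) - y * Ex M g"
proof -
  have "(\<lambda>x. (f x - y) * g x) = (\<lambda>x. f x * g x - y * g x)" by (auto simp: algebra_simps)
  then show ?thesis using L2_mult_int[OF assms(2,3)] L2_int[OF P assms(3)] by (simp add: Ex_def)
qed

lemma quad: assumes "f \<in> L2 M" "g \<in> L2 M"
  shows "Ex M (\<lambda>x. (f x - t * g x)\<^sup>2) = Ex M (\<lambda>x. (f x)\<^sup>2) - 2 * t * Ex M (\<lambda>x. f x * g x) + t\<^sup>2 * Ex M (\<lambda>x. (g x)\<^sup>2)"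
proof -
  have "(\<lambda>x. (f x - t * g x)\<^sup>2) = (\<lambda>x. (f x)\<^sup>2 - (2 * t) * (f x * g x) + t\<^sup>2 * (g x)\<^sup>2)"
    by (auto simp: power2_eq_square algebra_simps)
  then show ?thesis using L2_mult_int[OF assms(1,2)] L2_sq[OF assms(1)] L2_sq[OF assms(2)]
    by (simp add: Ex_def)
qed

lemma l2norm_sq: "(\<lambda>k. l2norm M (\<lambda>x. fs k x - g x)) \<longlonglongrightarrow> 0 \<Longrightarrow>
   (\<lambda>k. Ex M (\<lambda>x. (fs k x - g x)\<^sup>2)) \<longlonglongrightarrow> 0"
proof -
  assume h: "(\<lambda>k. l2norm M (\<lambda>x. fs k x - g x)) \<longlonglongrightarrow> 0"
  have "(\<lambda>k. (l2norm M (\<lambda>x. fs k x - g x))\<^sup>2) \<longlonglongrightarrow> 0\<^sup>2" by (rule tendsto_power[OF h])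
  moreover have "(l2norm M (\<lambda>x. fs k x - g x))\<^sup>2 = Ex M (\<lambda>x. (fs k x - g x)\<^sup>2)" for k
    unfolding l2norm_def Ex_def by (simp add: Ex_sq_nonneg[unfolded Ex_def])
  ultimately show ?thesis by simp
qed

lemma Ex_cont:
  assumes xi: "\<xi> \<in> L2 M" and hs: "\<And>k. \<eta>s k \<in> L2 M" and h: "\<eta> \<in> L2 M"
    and lim: "(\<lambda>k. l2norm M (\<lambda>x. \<eta>s k x - \<eta> x)) \<longlonglongrightarrow> 0"
  shows "(\<lambda>k. Ex M (\<lambda>x. \<xi> x * \<eta>s k x)) \<longlonglongrightarrow> Ex M (\<lambda>x. \<xi> x * \<eta> x)"
proof (rule LIM_zero_cancel, rule Lim_null_comparison)
  have "(\<lambda>k. sqrt (Ex M (\<lambda>x. (\<xi> x)\<^sup>2)) * l2norm M (\<lambda>x. \<eta>s k x - \<eta> x)) \<longlonglongrightarrow> sqrt (Ex M (\<lambda>x. (\<xi> x)\<^sup>2)) * 0"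
    by (intro tendsto_mult tendsto_const lim)
  then show "(\<lambda>k. sqrt (Ex M (\<lambda>x. (\<xi> x)\<^sup>2)) * l2norm M (\<lambda>x. \<eta>s k x - \<eta> x)) \<longlonglongrightarrow> 0" by simp
  show "\<forall>\<^sub>F k in sequentially. norm (Ex M (\<lambda>x. \<xi> x * \<eta>s k x) - Ex M (\<lambda>x. \<xi> x * \<eta> x))
      \<le> sqrt (Ex M (\<lambda>x. (\<xi> x)\<^sup>2)) * l2norm M (\<lambda>x. \<eta>s k x - \<eta> x)"
  proof (rule always_eventually, rule allI)
    fix k
    have "Ex M (\<lambda>x. \<xi> x * \<eta>s k x) - Ex M (\<lambda>x. \<xi> x * \<eta> x) = Ex M (\<lambda>x. \<xi> x * (\<eta>s k x - \<eta> x))"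
      using Ex_mult_diff[OF xi hs h] by simp
    also have "\<bar>\<dots>\<bar> \<le> sqrt (Ex M (\<lambda>x. (\<xi> x)\<^sup>2)) * sqrt (Ex M (\<lambda>x. (\<eta>s k x - \<eta> x)\<^sup>2))"
      by (rule CS[OF xi L2_diff[OF hs h]])
    finally show "norm (Ex M (\<lambda>x. \<xi> x * \<eta>s k x) - Ex M (\<lambda>x. \<xi> x * \<eta> x))
      \<le> sqrt (Ex M (\<lambda>x. (\<xi> x)\<^sup>2)) * l2norm M (\<lambda>x. \<eta>s k x - \<eta> x)"
      by (simp add: l2norm_def Ex_def)
  qed
qed

lemma sep:
  assumes P: "prob_space M" and comp: "L2_compact M S" and cv: "L2_convex S" and cl: "L2_closed M S"
    and ne: "S \<noteq> {}" and h0: "\<eta>0 \<in> L2 M" and nS: "\<eta>0 \<notin> S"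
  shows "\<exists>\<xi>\<in>L2 M. \<exists>c. (\<forall>\<eta>\<in>S. Ex M (\<lambda>x. \<xi> x * \<eta> x) \<le> c) \<and> c < Ex M (\<lambda>x. \<xi> x * \<eta>0 x)"
proof -
  have SL: "S \<subseteq> L2 M" using comp by (simp add: L2_compact_def)
  define D where "D \<eta> = Ex M (\<lambda>x. (\<eta>0 x - \<eta> x)\<^sup>2)" for \<eta>
  have D0: "D \<eta> \<ge> 0" for \<eta> unfolding D_def by (rule Ex_sq_nonneg)
  define m where "m = Inf (D ` S)"
  have bdd: "bdd_below (D ` S)" unfolding bdd_below_def using D0 by auto
  have mle: "m \<le> D \<eta>" if "\<eta> \<in> S" for \<eta> unfolding m_def using bdd that by (auto intro: cInf_lower)
  have "\<exists>\<eta>\<in>S. D \<eta> < m + inverse (real (Suc k))" for k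
  proof -
    have "Inf (D ` S) < m + inverse (real (Suc k))" unfolding m_def by simp
    from cInf_lessD[OF _ this] ne show ?thesis by auto
  qed
  then obtain \<eta>s where hs: "\<And>k. \<eta>s k \<in> S" and hD: "\<And>k. D (\<eta>s k) < m + inverse (real (Suc k))"
    by metis
  from comp hs obtain r p where r: "strict_mono r" and pS: "p \<in> S"
    and lim: "(\<lambda>k. l2norm M (\<lambda>x. \<eta>s (r k) x - p x)) \<longlonglongrightarrow> 0"
    unfolding L2_compact_def by blast
  have pL: "p \<in> L2 M" using pS SL by auto
  have hL: "\<eta>s k \<in> L2 M" for k using hs SL by auto
  define \<xi> where "\<xi> = (\<lambda>x. \<eta>0 x - p x)"
  have xiL: "\<xi> \<in> L2 M" unfolding \<xi>_def by (rule L2_diff[OF h0 pL])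
  have Dxi: "D p = Ex M (\<lambda>x. (\<xi> x)\<^sup>2)" by (simp add: D_def \<xi>_def)
  have Dk: "D (\<eta>s (r k)) = Ex M (\<lambda>x. (\<xi> x)\<^sup>2) - 2 * 1 * (Ex M (\<lambda>x. \<xi> x * \<eta>s (r k) x) - Ex M (\<lambda>x. \<xi> x * p x))
      + 1\<^sup>2 * Ex M (\<lambda>x. (\<eta>s (r k) x - p x)\<^sup>2)" for k
  proof -
    have "D (\<eta>s (r k)) = Ex M (\<lambda>x. (\<xi> x - 1 * (\<eta>s (r k) x - p x))\<^sup>2)"
      by (simp add: D_def \<xi>_def algebra_simps)
    also have "\<dots> = Ex M (\<lambda>x. (\<xi> x)\<^sup>2) - 2 * 1 * Ex M (\<lambda>x. \<xi> x * (\<eta>s (r k) x - p x))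
      + 1\<^sup>2 * Ex M (\<lambda>x. (\<eta>s (r k) x - p x)\<^sup>2)"
      by (rule quad[OF xiL L2_diff[OF hL pL]])
    also have "Ex M (\<lambda>x. \<xi> x * (\<eta>s (r k) x - p x)) = Ex M (\<lambda>x. \<xi> x * \<eta>s (r k) x) - Ex M (\<lambda>x. \<xi> x * p x)"
      by (rule Ex_mult_diff[OF xiL hL pL])
    finally show ?thesis .
  qed
  have c1: "(\<lambda>k. Ex M (\<lambda>x. \<xi> x * \<eta>s (r k) x)) \<longlonglongrightarrow> Ex M (\<lambda>x. \<xi> x * p x)"
    by (rule Ex_cont[OF xiL hL pL lim])
  have c2: "(\<lambda>k. Ex M (\<lambda>x. (\<eta>s (r k) x - p x)\<^sup>2)) \<longlonglongrightarrow> 0" by (rule l2norm_sq[OF lim])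
  have "(\<lambda>k. D (\<eta>s (r k))) \<longlonglongrightarrow> Ex M (\<lambda>x. (\<xi> x)\<^sup>2) - 2 * 1 * (Ex M (\<lambda>x. \<xi> x * p x) - Ex M (\<lambda>x. \<xi> x * p x)) + 1\<^sup>2 * 0"
    unfolding Dk by (intro tendsto_intros c1 c2)
  then have limD: "(\<lambda>k. D (\<eta>s (r k))) \<longlonglongrightarrow> D p" by (simp add: Dxi)
  have "(\<lambda>k. inverse (real (Suc (r k)))) \<longlonglongrightarrow> 0"
    using LIMSEQ_subseq_LIMSEQ[OF LIMSEQ_inverse_real_of_nat r] by (simp add: o_def)
  then have limm: "(\<lambda>k. m + inverse (real (Suc (r k)))) \<longlonglongrightarrow> m + 0" by (intro tendsto_intros)
  have "D p \<le> m + 0"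
    by (rule LIMSEQ_le[OF limD limm]) (use hD less_imp_le in blast)
  then have pmin: "D p \<le> D \<eta>" if "\<eta> \<in> S" for \<eta> using mle[OF that] by simp
  have var: "Ex M (\<lambda>x. \<xi> x * (\<eta> x - p x)) \<le> 0" if hS: "\<eta> \<in> S" for \<eta>
  proof (rule ccontr)
    define a where "a = Ex M (\<lambda>x. \<xi> x * (\<eta> x - p x))"
    define b where "b = Ex M (\<lambda>x. (\<eta> x - p x)\<^sup>2)"
    assume "\<not> Ex M (\<lambda>x. \<xi> x * (\<eta> x - p x)) \<le> 0"
    then have a: "a > 0" by (simp add: a_def)
    have b: "b \<ge> 0" unfolding b_def by (rule Ex_sq_nonneg)
    have hL2: "\<eta> \<in> L2 M" using hS SL by auto
    define t where "t = min 1 (a / (b + 1))"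
    have t0: "t > 0" using a b by (simp add: t_def)
    have t1: "t \<le> 1" by (simp add: t_def)
    have "(\<lambda>x. (1 - t) * p x + t * \<eta> x) \<in> S" using cv pS hS t0 t1 unfolding L2_convex_def by auto
    then have "D p \<le> D (\<lambda>x. (1 - t) * p x + t * \<eta> x)" by (rule pmin)
    also have "D (\<lambda>x. (1 - t) * p x + t * \<eta> x) = Ex M (\<lambda>x. (\<xi> x - t * (\<eta> x - p x))\<^sup>2)"
      by (simp add: D_def \<xi>_def algebra_simps)
    also have "\<dots> = D p - 2 * t * a + t\<^sup>2 * b"
      unfolding quad[OF xiL L2_diff[OF hL2 pL]] Dxi a_def b_def ..
    finally have "2 * t * a \<le> t * (t * b)" by (simp add: power2_eq_square)
    then have i1: "2 * a \<le> t * b" using t0 by simp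
    have "t * b \<le> (a / (b + 1)) * b" using b by (intro mult_right_mono) (auto simp: t_def)
    also have "(a / (b + 1)) * b < a" using a b by (simp add: field_simps)
    finally show False using i1 a by linarith
  qed
  have Dp: "D p > 0"
  proof (rule ccontr)
    assume "\<not> D p > 0"
    then have "D p = 0" using D0[of p] by simp
    moreover have eqf: "(\<lambda>x. (p x - \<eta>0 x)\<^sup>2) = (\<lambda>x. (\<eta>0 x - p x)\<^sup>2)"
      by (rule ext) (rule power2_commute)
    ultimately have "l2norm M (\<lambda>x. p x - \<eta>0 x) = 0"
      unfolding l2norm_def D_def Ex_def by simp
    then have "(\<lambda>k::nat. l2norm M (\<lambda>x. (\<lambda>k. p) k x - \<eta>0 x)) \<longlonglongrightarrow> 0" by simp
    then have "\<eta>0 \<in> S" using cl[unfolded L2_closed_def, rule_format, of "\<lambda>k. p" \<eta>0] pS h0 by blast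
    with nS show False by simp
  qed
  show ?thesis
  proof (intro bexI exI conjI ballI)
    show "\<xi> \<in> L2 M" by (rule xiL)
    fix \<eta> assume hS: "\<eta> \<in> S"
    have hL2: "\<eta> \<in> L2 M" using hS SL by auto
    show "Ex M (\<lambda>x. \<xi> x * \<eta> x) \<le> Ex M (\<lambda>x. \<xi> x * p x)"
      using var[OF hS] Ex_mult_diff[OF xiL hL2 pL] by simp
  next
    have "Ex M (\<lambda>x. \<xi> x * \<xi> x) = Ex M (\<lambda>x. \<xi> x * \<eta>0 x) - Ex M (\<lambda>x. \<xi> x * p x)"
      using Ex_mult_diff[OF xiL h0 pL] by (simp add: \<xi>_def)
    moreover have "Ex M (\<lambda>x. \<xi> x * \<xi> x) = D p" by (simp add: Dxi power2_eq_square)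
    ultimately show "Ex M (\<lambda>x. \<xi> x * p x) < Ex M (\<lambda>x. \<xi> x * \<eta>0 x)" using Dp by simp
  qed
qed

lemma Ex_comb: assumes "integrable M f" "integrable M g"
  shows "Ex M (\<lambda>x. a * f x + b * g x) = a * Ex M f + b * Ex M g"
  using assms by (simp add: Ex_def)

lemma Ex_comb2: assumes "f \<in> L2 M" "g \<in> L2 M" "h \<in> L2 M"
  shows "Ex M (\<lambda>x. f x * (a * g x + b * h x)) = a * Ex M (\<lambda>x. f x * g x) + b * Ex M (\<lambda>x. f x * h x)"
proof -
  have "(\<lambda>x. f x * (a * g x + b * h x)) = (\<lambda>x. a * (f x * g x) + b * (f x * h x))" by (auto simp: algebra_simps)
  then show ?thesis using Ex_comb[OF L2_mult_int[OF assms(1,2)] L2_mult_int[OF assms(1,3)], of a b] by simp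
qed

theorem theorem1:
  fixes M :: "'a measure"
    and R V :: "('a \<Rightarrow> real) \<Rightarrow> ereal"
    and Q Qt :: "('a \<Rightarrow> real) set"
  assumes "prob_space M"
    and "coherent_risk_measure M R" and "risk_envelope M R Q"
    and "coherent_regret_measure M V" and "regret_envelope M V Qt"
    and "L2_compact M Qt"
  shows "(\<forall>\<xi>\<in>L2 M. R \<xi> = (INF y::real. ereal y + V (\<lambda>x. \<xi> x - y)))
         \<longleftrightarrow> Q = Qt \<inter> Pset M"
proof -
  note P = assms(1)
  note comp = assms(6)
  from assms(3) have Qne: "Q \<noteq> {}" and Qcv: "L2_convex Q" and Qcl: "L2_closed M Q" and QP: "Q \<subseteq> Pset M"
    and Rrep: "\<And>\<xi>. \<xi> \<in> L2 M \<Longrightarrow> R \<xi> = (SUP \<eta>\<in>Q. ereal (Ex M (\<lambda>x. \<xi> x * \<eta> x)))"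
    unfolding risk_envelope_def by auto
  from assms(5) have Qtne: "Qt \<noteq> {}" and Qtcv: "L2_convex Qt" and Qtcl: "L2_closed M Qt" and QtP: "Qt \<subseteq> Ptilde M"
    and Vrep: "\<And>\<xi>. \<xi> \<in> L2 M \<Longrightarrow> V \<xi> = (SUP \<eta>\<in>Qt. ereal (Ex M (\<lambda>x. \<xi> x * \<eta> x)))"
    unfolding regret_envelope_def by auto
  have PL: "Pset M \<subseteq> L2 M" by (auto simp: Pset_def)
  have PtL: "Ptilde M \<subseteq> L2 M" by (auto simp: Ptilde_def)
  have QL: "\<eta> \<in> L2 M" if "\<eta> \<in> Q" for \<eta> using that QP PL by auto
  have QtL: "\<eta> \<in> L2 M" if "\<eta> \<in> Qt" for \<eta> using that QtP PtL by auto
  have QE1: "Ex M \<eta> = 1" if "\<eta> \<in> Q" for \<eta> using that QP by (auto simp: Pset_def)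
  have Vshift: "V (\<lambda>x. \<xi> x - y) = (SUP \<eta>\<in>Qt. ereal (Ex M (\<lambda>x. \<xi> x * \<eta> x) - y * Ex M \<eta>))"
    if xi: "\<xi> \<in> L2 M" for \<xi> y
  proof -
    have "V (\<lambda>x. \<xi> x - y) = (SUP \<eta>\<in>Qt. ereal (Ex M (\<lambda>x. (\<xi> x - y) * \<eta> x)))"
      by (rule Vrep[OF L2_diffc[OF P xi]])
    also have "\<dots> = (SUP \<eta>\<in>Qt. ereal (Ex M (\<lambda>x. \<xi> x * \<eta> x) - y * Ex M \<eta>))"
      by (rule SUP_cong[OF refl]) (simp add: Ex_shift[OF P xi QtL])
    finally show ?thesis .
  qed
  show ?thesis
  proof
    assume H: "\<forall>\<xi>\<in>L2 M. R \<xi> = (INF y::real. ereal y + V (\<lambda>x. \<xi> x - y))"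
    have sub1: "Q \<subseteq> Qt"
    proof
      fix \<eta>0 assume h0: "\<eta>0 \<in> Q"
      show "\<eta>0 \<in> Qt"
      proof (rule ccontr)
        assume "\<eta>0 \<notin> Qt"
        from sep[OF P comp Qtcv Qtcl Qtne QL[OF h0] this] obtain \<xi> c where xi: "\<xi> \<in> L2 M"
          and bnd: "\<And>\<eta>. \<eta> \<in> Qt \<Longrightarrow> Ex M (\<lambda>x. \<xi> x * \<eta> x) \<le> c" and lt: "c < Ex M (\<lambda>x. \<xi> x * \<eta>0 x)"
          by blast
        have "ereal (Ex M (\<lambda>x. \<xi> x * \<eta>0 x)) \<le> R \<xi>" unfolding Rrep[OF xi] using h0 by (rule SUP_upper)
        also have "R \<xi> \<le> ereal 0 + V (\<lambda>x. \<xi> x - 0)" unfolding H[rule_format, OF xi] by (rule INF_lower) simp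
        also have "\<dots> = V \<xi>" by simp
        also have "\<dots> \<le> ereal c" unfolding Vrep[OF xi] by (rule SUP_least) (simp add: bnd)
        finally show False using lt by simp
      qed
    qed
    have compQ: "L2_compact M Q"
      unfolding L2_compact_def
    proof (intro conjI allI impI)
      show "Q \<subseteq> L2 M" using QL by auto
      fix \<eta>s :: "nat \<Rightarrow> 'a \<Rightarrow> real" assume hs: "\<forall>k. \<eta>s k \<in> Q"
      then have "\<forall>k. \<eta>s k \<in> Qt" using sub1 by auto
      with comp obtain r \<eta> where r: "strict_mono r" and hQt: "\<eta> \<in> Qt"
        and lim: "(\<lambda>k. l2norm M (\<lambda>x. \<eta>s (r k) x - \<eta> x)) \<longlonglongrightarrow> 0"
        unfolding L2_compact_def by blast
      have "\<eta> \<in> Q" using Qcl[unfolded L2_closed_def, rule_format, of "\<lambda>k. \<eta>s (r k)" \<eta>] hs QtL[OF hQt] lim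
        by blast
      with r lim show "\<exists>r \<eta>. strict_mono r \<and> \<eta> \<in> Q \<and> (\<lambda>k. l2norm M (\<lambda>x. \<eta>s (r k) x - \<eta> x)) \<longlonglongrightarrow> 0"
        by blast
    qed
    have sub2: "Qt \<inter> Pset M \<subseteq> Q"
    proof
      fix \<eta>0 assume h0: "\<eta>0 \<in> Qt \<inter> Pset M"
      then have h0L: "\<eta>0 \<in> L2 M" and E1: "Ex M \<eta>0 = 1" and h0t: "\<eta>0 \<in> Qt" by (auto simp: Pset_def)
      show "\<eta>0 \<in> Q"
      proof (rule ccontr)
        assume "\<eta>0 \<notin> Q"
        from sep[OF P compQ Qcv Qcl Qne h0L this] obtain \<xi> c where xi: "\<xi> \<in> L2 M"
          and bnd: "\<And>\<eta>. \<eta> \<in> Q \<Longrightarrow> Ex M (\<lambda>x. \<xi> x * \<eta> x) \<le> c" and lt: "c < Ex M (\<lambda>x. \<xi> x * \<eta>0 x)"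
          by blast
        have "ereal (Ex M (\<lambda>x. \<xi> x * \<eta>0 x)) \<le> R \<xi>"
          unfolding H[rule_format, OF xi]
        proof (rule INF_greatest)
          fix y :: real
          have "ereal (Ex M (\<lambda>x. \<xi> x * \<eta>0 x) - y * Ex M \<eta>0) \<le> V (\<lambda>x. \<xi> x - y)"
            unfolding Vshift[OF xi] using h0t by (rule SUP_upper)
          then have "ereal y + ereal (Ex M (\<lambda>x. \<xi> x * \<eta>0 x) - y * Ex M \<eta>0) \<le> ereal y + V (\<lambda>x. \<xi> x - y)"
            by (rule add_left_mono)
          then show "ereal (Ex M (\<lambda>x. \<xi> x * \<eta>0 x)) \<le> ereal y + V (\<lambda>x. \<xi> x - y)"
            using E1 by simp
        qed
        also have "R \<xi> \<le> ereal c" unfolding Rrep[OF xi] by (rule SUP_least) (simp add: bnd)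
        finally show False using lt by simp
      qed
    qed
    show "Q = Qt \<inter> Pset M" using sub1 sub2 QP by auto
  next
    assume Qeq: "Q = Qt \<inter> Pset M"
    show "\<forall>\<xi>\<in>L2 M. R \<xi> = (INF y::real. ereal y + V (\<lambda>x. \<xi> x - y))"
    proof
      fix \<xi> assume xi: "\<xi> \<in> L2 M"
      have le: "R \<xi> \<le> (INF y::real. ereal y + V (\<lambda>x. \<xi> x - y))"
      proof (rule INF_greatest)
        fix y :: real
        show "R \<xi> \<le> ereal y + V (\<lambda>x. \<xi> x - y)"
          unfolding Rrep[OF xi]
        proof (rule SUP_least)
          fix \<eta> assume hQ: "\<eta> \<in> Q"
          then have ht: "\<eta> \<in> Qt" using Qeq by auto
          have "ereal (Ex M (\<lambda>x. \<xi> x * \<eta> x) - y * Ex M \<eta>) \<le> V (\<lambda>x. \<xi> x - y)"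
            unfolding Vshift[OF xi] using ht by (rule SUP_upper)
          then have "ereal y + ereal (Ex M (\<lambda>x. \<xi> x * \<eta> x) - y * Ex M \<eta>) \<le> ereal y + V (\<lambda>x. \<xi> x - y)"
            by (rule add_left_mono)
          then show "ereal (Ex M (\<lambda>x. \<xi> x * \<eta> x)) \<le> ereal y + V (\<lambda>x. \<xi> x - y)"
            using QE1[OF hQ] by simp
        qed
      qed
      have ge: "(INF y::real. ereal y + V (\<lambda>x. \<xi> x - y)) \<le> R \<xi>"
      proof (cases "R \<xi> = \<infinity>")
        case True then show ?thesis by simp
      next
        case False
        from Qne obtain \<eta>1 where h1: "\<eta>1 \<in> Q" by auto
        have r1: "ereal (Ex M (\<lambda>x. \<xi> x * \<eta>1 x)) \<le> R \<xi>" unfolding Rrep[OF xi] using h1 by (rule SUP_upper)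
        then have "R \<xi> \<noteq> -\<infinity>" by auto
        with False obtain r where rr: "R \<xi> = ereal r" by (cases "R \<xi>") auto
        have Qr: "Ex M (\<lambda>x. \<xi> x * \<eta> x) \<le> r" if "\<eta> \<in> Q" for \<eta>
        proof -
          have "ereal (Ex M (\<lambda>x. \<xi> x * \<eta> x)) \<le> R \<xi>" unfolding Rrep[OF xi] using that by (rule SUP_upper)
          then show ?thesis using rr by simp
        qed
        show ?thesis
        proof (rule ereal_le_epsilon2)
          fix e :: real assume e: "0 < e"
          define K where "K = (\<lambda>\<eta>. (Ex M \<eta>, Ex M (\<lambda>x. \<xi> x * \<eta> x))) ` Qt"
          have one: "(\<lambda>x. 1::real) \<in> L2 M" by (rule L2_const[OF P])
          have Ex1: "Ex M \<eta> = Ex M (\<lambda>x. 1 * \<eta> x)" for \<eta> by simp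
          have cvK: "convex K"
            unfolding convex_def K_def
          proof (intro ballI allI impI)
            fix p q and u v :: real
            assume pK: "p \<in> (\<lambda>\<eta>. (Ex M \<eta>, Ex M (\<lambda>x. \<xi> x * \<eta> x))) ` Qt"
              and qK: "q \<in> (\<lambda>\<eta>. (Ex M \<eta>, Ex M (\<lambda>x. \<xi> x * \<eta> x))) ` Qt"
              and u: "0 \<le> u" and v: "0 \<le> v" and uv: "u + v = 1"
            from pK obtain \<eta> where h: "\<eta> \<in> Qt" and p: "p = (Ex M \<eta>, Ex M (\<lambda>x. \<xi> x * \<eta> x))" by auto
            from qK obtain \<eta>' where h': "\<eta>' \<in> Qt" and q: "q = (Ex M \<eta>', Ex M (\<lambda>x. \<xi> x * \<eta>' x))" by auto
            define \<theta> where "\<theta> = (\<lambda>x. (1 - v) * \<eta> x + v * \<eta>' x)"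
            have "\<theta> \<in> Qt" using Qtcv h h' v uv u unfolding L2_convex_def \<theta>_def by auto
            moreover have "Ex M \<theta> = u * Ex M \<eta> + v * Ex M \<eta>'"
              using Ex_comb2[OF one QtL[OF h] QtL[OF h'], of "1 - v" v] uv by (simp add: \<theta>_def)
            moreover have "Ex M (\<lambda>x. \<xi> x * \<theta> x) = u * Ex M (\<lambda>x. \<xi> x * \<eta> x) + v * Ex M (\<lambda>x. \<xi> x * \<eta>' x)"
              using Ex_comb2[OF xi QtL[OF h] QtL[OF h'], of "1 - v" v] uv by (simp add: \<theta>_def)
            ultimately show "u *\<^sub>R p + v *\<^sub>R q \<in> (\<lambda>\<eta>. (Ex M \<eta>, Ex M (\<lambda>x. \<xi> x * \<eta> x))) ` Qt"
              unfolding p q by (auto intro!: image_eqI[where x = \<theta>])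
          qed
          have cpK: "compact K"
            unfolding compact_eq_seq_compact_metric seq_compact_def
          proof (intro allI impI)
            fix f :: "nat \<Rightarrow> real \<times> real" assume fK: "\<forall>n. f n \<in> K"
            then have "\<forall>n. \<exists>\<eta>\<in>Qt. f n = (Ex M \<eta>, Ex M (\<lambda>x. \<xi> x * \<eta> x))" unfolding K_def by auto
            then obtain \<eta>s where hs: "\<And>n. \<eta>s n \<in> Qt" and fn: "\<And>n. f n = (Ex M (\<eta>s n), Ex M (\<lambda>x. \<xi> x * \<eta>s n x))"
              by metis
            from comp hs obtain r \<eta> where r: "strict_mono r" and hQt: "\<eta> \<in> Qt"
              and lim: "(\<lambda>k. l2norm M (\<lambda>x. \<eta>s (r k) x - \<eta> x)) \<longlonglongrightarrow> 0"
              unfolding L2_compact_def by blast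
            have l1: "(\<lambda>k. Ex M (\<lambda>x. 1 * \<eta>s (r k) x)) \<longlonglongrightarrow> Ex M (\<lambda>x. 1 * \<eta> x)"
              by (rule Ex_cont[OF one QtL[OF hs] QtL[OF hQt] lim])
            have l2: "(\<lambda>k. Ex M (\<lambda>x. \<xi> x * \<eta>s (r k) x)) \<longlonglongrightarrow> Ex M (\<lambda>x. \<xi> x * \<eta> x)"
              by (rule Ex_cont[OF xi QtL[OF hs] QtL[OF hQt] lim])
            have "(f \<circ> r) \<longlonglongrightarrow> (Ex M \<eta>, Ex M (\<lambda>x. \<xi> x * \<eta> x))"
              using tendsto_Pair[OF l1 l2] by (simp add: o_def fn)
            moreover have "(Ex M \<eta>, Ex M (\<lambda>x. \<xi> x * \<eta> x)) \<in> K" using hQt by (auto simp: K_def)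
            ultimately show "\<exists>l\<in>K. \<exists>r. strict_mono r \<and> (f \<circ> r) \<longlonglongrightarrow> l" using r by blast
          qed
          have zK: "(1, r + e) \<notin> K"
          proof
            assume "(1, r + e) \<in> K"
            then obtain \<eta> where h: "\<eta> \<in> Qt" and eq1: "Ex M \<eta> = 1" and eq2: "Ex M (\<lambda>x. \<xi> x * \<eta> x) = r + e"
              unfolding K_def by auto
            have "\<eta> \<in> Pset M" using h QtP eq1 by (auto simp: Pset_def Ptilde_def)
            then have "\<eta> \<in> Q" using h Qeq by auto
            from Qr[OF this] eq2 e show False by simp
          qed
          from separating_hyperplane_closed_point[OF cvK compact_imp_closed[OF cpK] zK]
          obtain a b where ab1: "inner a (1, r + e) < b" and ab2: "\<forall>x\<in>K. inner a x > b" by blast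
          obtain a1 a2 where a: "a = (a1, a2)" by (cases a)
          have sepi: "a1 * Ex M \<eta> + a2 * Ex M (\<lambda>x. \<xi> x * \<eta> x) > b" if "\<eta> \<in> Qt" for \<eta>
            using ab2 that unfolding K_def a by auto
          have z: "a1 + a2 * (r + e) < b" using ab1 a by simp
          have h1t: "\<eta>1 \<in> Qt" using h1 Qeq by auto
          have "a1 + a2 * Ex M (\<lambda>x. \<xi> x * \<eta>1 x) > b" using sepi[OF h1t] QE1[OF h1] by simp
          with z have "a2 * Ex M (\<lambda>x. \<xi> x * \<eta>1 x) > a2 * (r + e)" by linarith
          moreover have "Ex M (\<lambda>x. \<xi> x * \<eta>1 x) < r + e" using Qr[OF h1] e by simp
          ultimately have a2: "a2 < 0"
            by (metis mult_left_mono less_le_not_le linorder_not_le)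
          define y where "y = - a1 / a2"
          have bd: "Ex M (\<lambda>x. \<xi> x * \<eta> x) - y * Ex M \<eta> \<le> r + e - y" if "\<eta> \<in> Qt" for \<eta>
          proof (rule ccontr)
            assume "\<not> ?thesis"
            then have X: "Ex M (\<lambda>x. \<xi> x * \<eta> x) - y * Ex M \<eta> - (r + e - y) > 0" by simp
            have "a2 * (Ex M (\<lambda>x. \<xi> x * \<eta> x) - y * Ex M \<eta> - (r + e - y))
                 = a2 * Ex M (\<lambda>x. \<xi> x * \<eta> x) + a1 * Ex M \<eta> - (a1 + a2 * (r + e))"
              using a2 by (simp add: y_def field_simps)
            also have "\<dots> > 0" using sepi[OF that] z by simp
            finally have "a2 * (Ex M (\<lambda>x. \<xi> x * \<eta> x) - y * Ex M \<eta> - (r + e - y)) > 0" .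
            moreover have "a2 * (Ex M (\<lambda>x. \<xi> x * \<eta> x) - y * Ex M \<eta> - (r + e - y)) < 0"
              using a2 X by (rule mult_neg_pos)
            ultimately show False by simp
          qed
          have "V (\<lambda>x. \<xi> x - y) \<le> ereal (r + e - y)"
            unfolding Vshift[OF xi] by (rule SUP_least) (simp add: bd)
          then have "ereal y + V (\<lambda>x. \<xi> x - y) \<le> ereal y + ereal (r + e - y)" by (rule add_left_mono)
          then have "ereal y + V (\<lambda>x. \<xi> x - y) \<le> R \<xi> + ereal e" using rr by simp
          then show "(INF y::real. ereal y + V (\<lambda>x. \<xi> x - y)) \<le> R \<xi> + ereal e"
            by (rule INF_lower2[OF UNIV_I])
        qed
      qed
      from le ge show "R \<xi> = (INF y::real. ereal y + V (\<lambda>x. \<xi> x - y))" by (rule antisym)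
    qed
  qed
qed

end
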